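(* If $Q=ABA'B'$ is a quadrilateral in $K^2$, possibly improper, then the pairs of opposite sides of $Q$ ($A,A'$ and $B,B'$) are $Q$-orthogonal, and the two diagonals of $Q$ are $Q$-orthogonal.
   Context: $K$ is a field of characteristic $\neq 2$. Every line $L$ in $K^2$ has an equation $tX-uY+v=0$ normalized so that $t=1$ if $u=0$ and $u=1$ if $u\neq 0$; coefficients denoted $t_L,u_L,v_L$. A quadrilateral $Q=ABA'B'$ consists of four distinct lines $A,B,A',B'$ (sides), not all through one point, with adjacent sides ($A,B$; $B,A'$; $A',B'$; $B',A$) not parallel; opposite sides may be parallel. Vertices: $A\cap B$, $B\cap A'$, $A'\cap B'$, $B'\cap A$; three sides may be concurrent, in which case two vertices coincide and $Q$ is improper. The diagonals are the line through $A\cap B$ and $A'\cap B'$ and the line through $B\cap A'$ and $B'\cap A$ (the lines through nonadjacent vertices). Let $\alpha=t_Au_Bu_{A'}u_{B'}-u_At_Bu_{A'}u_{B'}+u_Au_Bt_{A'}u_{B'}-u_Au_Bu_{A'}t_{B'}$, $\beta=t_Au_Bt_{A'}u_{B'}-u_At_Bu_{A'}t_{B'}$, $\gamma=t_At_Bt_{A'}u_{B'}-t_At_Bu_{A'}t_{B'}+t_Au_Bt_{A'}t_{B'}-u_At_Bt_{A'}t_{B'}$, and $\langle \mathbf v,\mathbf w\rangle_Q=\mathbf v^T\begin{pmatrix}\gamma&-\beta\\-\beta&\alpha\end{pmatrix}\mathbf w$. Lines $\ell_1,\ell_2$ are $Q$-orthogonal if $\langle (u_{\ell_1},t_{\ell_1}),(u_{\ell_2},t_{\ell_2})\rangle_Q=0$.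 *)

theory Defs
  imports Main
begin

text \<open>A line is represented by its normalized coefficient
  triple (t, u, v), standing for the equation t X - u Y + v = 0, with the
  normalization t = 1 if u = 0, and u = 1 if u is nonzero.\<close>

type_synonym 'a point = "'a \<times> 'a"
type_synonym 'a line = "'a \<times> 'a \<times> 'a"

definition tL :: "'a line \<Rightarrow> 'a" where "tL L = fst L"
definition uL :: "'a line \<Rightarrow> 'a" where "uL L = fst (snd L)"
definition vL :: "'a line \<Rightarrow> 'a" where "vL L = snd (snd L)"

definition normalized :: "'a::field line \<Rightarrow> bool" where
  "normalized L \<longleftrightarrow> (uL L = 0 \<and> tL L = 1) \<or> uL L = 1"

definition on_line :: "'a::field point \<Rightarrow> 'a line \<Rightarrow> bool" where
  "on_line p L \<longleftrightarrow> tL L * fst p - uL L * snd p + vL L = 0"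

definition parallel :: "'a::field line \<Rightarrow> 'a line \<Rightarrow> bool" where
  "parallel L M \<longleftrightarrow> tL L * uL M = uL L * tL M"

definition meet :: "'a::field line \<Rightarrow> 'a line \<Rightarrow> 'a point" where
  "meet L M = (THE p. on_line p L \<and> on_line p M)"

definition line_through :: "'a::field point \<Rightarrow> 'a point \<Rightarrow> 'a line" where
  "line_through p q = (THE L. normalized L \<and> on_line p L \<and> on_line q L)"

definition quadrilateral :: "'a::field line \<Rightarrow> 'a line \<Rightarrow> 'a line \<Rightarrow> 'a line \<Rightarrow> bool" where
  "quadrilateral A B A' B' \<longleftrightarrow>
     normalized A \<and> normalized B \<and> normalized A' \<and> normalized B' \<and>
     distinct [A, B, A', B'] \<and>
     \<not> (\<exists>p. on_line p A \<and> on_line p B \<and> on_line p A' \<and> on_line p B') \<and>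
     \<not> parallel A B \<and> \<not> parallel B A' \<and> \<not> parallel A' B' \<and> \<not> parallel B' A"

definition diag1 :: "'a::field line \<Rightarrow> 'a line \<Rightarrow> 'a line \<Rightarrow> 'a line \<Rightarrow> 'a line" where
  "diag1 A B A' B' = line_through (meet A B) (meet A' B')"

definition diag2 :: "'a::field line \<Rightarrow> 'a line \<Rightarrow> 'a line \<Rightarrow> 'a line \<Rightarrow> 'a line" where
  "diag2 A B A' B' = line_through (meet B A') (meet B' A)"

definition qalpha :: "'a::field line \<Rightarrow> 'a line \<Rightarrow> 'a line \<Rightarrow> 'a line \<Rightarrow> 'a" where
  "qalpha A B A' B' =
     tL A * uL B * uL A' * uL B' - uL A * tL B * uL A' * uL B'
   + uL A * uL B * tL A' * uL B' - uL A * uL B * uL A' * tL B'"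

definition qbeta :: "'a::field line \<Rightarrow> 'a line \<Rightarrow> 'a line \<Rightarrow> 'a line \<Rightarrow> 'a" where
  "qbeta A B A' B' = tL A * uL B * tL A' * uL B' - uL A * tL B * uL A' * tL B'"

definition qgamma :: "'a::field line \<Rightarrow> 'a line \<Rightarrow> 'a line \<Rightarrow> 'a line \<Rightarrow> 'a" where
  "qgamma A B A' B' =
     tL A * tL B * tL A' * uL B' - tL A * tL B * uL A' * tL B'
   + tL A * uL B * tL A' * tL B' - uL A * tL B * tL A' * tL B'"

definition qform :: "'a::field line \<Rightarrow> 'a line \<Rightarrow> 'a line \<Rightarrow> 'a line \<Rightarrow> 'a \<times> 'a \<Rightarrow> 'a \<times> 'a \<Rightarrow> 'a" where
  "qform A B A' B' v w =
     fst v * (qgamma A B A' B' * fst w - qbeta A B A' B' * snd w)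
   + snd v * (- qbeta A B A' B' * fst w + qalpha A B A' B' * snd w)"

definition q_orthogonal :: "'a::field line \<Rightarrow> 'a line \<Rightarrow> 'a line \<Rightarrow> 'a line \<Rightarrow> 'a line \<Rightarrow> 'a line \<Rightarrow> bool" where
  "q_orthogonal A B A' B' l1 l2 \<longleftrightarrow>
     qform A B A' B' (uL l1, tL l1) (uL l2, tL l2) = 0"

end

theory Submission imports Defs begin

lemma div_aux:
  fixes D t u v a b :: "'a::field"
  assumes "D \<noteq> 0"
  shows "t*(a/D) - u*(b/D) + v = (t*a - u*b + v*D)/D"
  using assms by (simp add: field_simps)

lemma meet_eq:
  fixes L M :: "'a::field line"
  assumes np: "\<not> parallel L M"
  shows "meet L M = ((vL L * uL M - uL L * vL M)/(uL L * tL M - tL L * uL M),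
                     (tL M * vL L - tL L * vL M)/(uL L * tL M - tL L * uL M))"
proof -
  let ?D = "uL L * tL M - tL L * uL M"
  have D: "?D \<noteq> 0" using np unfolding parallel_def by (auto simp: algebra_simps)
  let ?p = "((vL L * uL M - uL L * vL M)/?D, (tL M * vL L - tL L * vL M)/?D)"
  have on1: "tL L * ((vL L * uL M - uL L * vL M)/?D) - uL L * ((tL M * vL L - tL L * vL M)/?D) + vL L
     = (tL L * (vL L * uL M - uL L * vL M) - uL L * (tL M * vL L - tL L * vL M) + vL L * ?D)/?D"
    using D by (rule div_aux)
  have on2: "tL M * ((vL L * uL M - uL L * vL M)/?D) - uL M * ((tL M * vL L - tL L * vL M)/?D) + vL M
     = (tL M * (vL L * uL M - uL L * vL M) - uL M * (tL M * vL L - tL L * vL M) + vL M * ?D)/?D"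
    using D by (rule div_aux)
  have z1: "tL L * (vL L * uL M - uL L * vL M) - uL L * (tL M * vL L - tL L * vL M) + vL L * ?D = 0"
    by (simp add: algebra_simps)
  have z2: "tL M * (vL L * uL M - uL L * vL M) - uL M * (tL M * vL L - tL L * vL M) + vL M * ?D = 0"
    by (simp add: algebra_simps)
  have on: "on_line ?p L \<and> on_line ?p M"
    unfolding on_line_def fst_conv snd_conv on1 on2 z1 z2 by simp
  have un: "q = ?p" if "on_line q L \<and> on_line q M" for q
  proof -
    obtain x y where q: "q = (x,y)" by (cases q)
    have e1: "tL L * x - uL L * y + vL L = 0" and e2: "tL M * x - uL M * y + vL M = 0"
      using that q unfolding on_line_def by auto
    have f1: "tL L * x = uL L * y - vL L"
    proof -
      have "tL L * x = (tL L * x - uL L * y + vL L) + uL L * y - vL L" by simp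
      with e1 show ?thesis by simp
    qed
    have f2: "tL M * x = uL M * y - vL M"
    proof -
      have "tL M * x = (tL M * x - uL M * y + vL M) + uL M * y - vL M" by simp
      with e2 show ?thesis by simp
    qed
    have g1: "uL L * y = tL L * x + vL L" using f1 by simp
    have g2: "uL M * y = tL M * x + vL M" using f2 by simp
    have xD: "x * ?D = vL L * uL M - uL L * vL M"
    proof -
      have "x * ?D = uL L * (tL M * x) - uL M * (tL L * x)" by (simp add: algebra_simps)
      also have "\<dots> = uL L * (uL M * y - vL M) - uL M * (uL L * y - vL L)"
        by (simp only: f1 f2)
      finally show ?thesis by (simp add: algebra_simps)
    qed
    have yD: "y * ?D = tL M * vL L - tL L * vL M"
    proof -
      have "y * ?D = tL M * (uL L * y) - tL L * (uL M * y)" by (simp add: algebra_simps)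
      also have "\<dots> = tL M * (tL L * x + vL L) - tL L * (tL M * x + vL M)"
        by (simp only: g1 g2)
      finally show ?thesis by (simp add: algebra_simps)
    qed
    have "x = (vL L * uL M - uL L * vL M)/?D" using D xD by (simp add: eq_divide_eq)
    moreover have "y = (tL M * vL L - tL L * vL M)/?D" using D yD by (simp add: eq_divide_eq)
    ultimately show ?thesis using q by simp
  qed
  show ?thesis unfolding meet_def
    by (rule the_equality[of "\<lambda>p. on_line p L \<and> on_line p M", OF on un])
qed

lemma line_through_prop:
  fixes p q :: "'a::field point"
  assumes "p \<noteq> q"
  shows "\<exists>c. uL (line_through p q) = c * (fst q - fst p) \<and> tL (line_through p q) = c * (snd q - snd p)"
proof -
  obtain px py qx qy where pq: "p = (px,py)" "q = (qx,qy)" by (cases p, cases q)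
  have d: "qx \<noteq> px \<or> qy \<noteq> py" using assms pq by auto
  define L0 :: "'a line" where "L0 = (if qx = px then (1, 0, - px)
      else ((qy - py)/(qx - px), 1, py - (qy - py)/(qx - px) * px))"
  have P0: "normalized L0 \<and> on_line p L0 \<and> on_line q L0"
  proof (cases "qx = px")
    case True
    then show ?thesis unfolding L0_def normalized_def on_line_def tL_def uL_def vL_def using pq by simp
  next
    case False
    then have nz: "qx - px \<noteq> 0" by simp
    show ?thesis unfolding L0_def normalized_def on_line_def tL_def uL_def vL_def using pq False nz
      by (simp add: field_simps)
  qed
  have U: "L = L0" if H: "normalized L \<and> on_line p L \<and> on_line q L" for L
  proof -
    obtain t u v where L: "L = (t,u,v)" by (cases L) auto
    have e1: "t*px - u*py + v = 0" "t*qx - u*qy + v = 0" "(u = 0 \<and> t = 1) \<or> u = 1"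
      using H L pq unfolding normalized_def on_line_def tL_def uL_def vL_def by auto
    have e3: "t*(qx - px) = u*(qy - py)"
    proof -
      have "t*(qx - px) = (t*qx - u*qy + v) - (t*px - u*py + v) + u*(qy - py)" by (simp add: algebra_simps)
      with e1 show ?thesis by simp
    qed
    show ?thesis
    proof (cases "qx = px")
      case True
      then have "qy \<noteq> py" using d by auto
      with e3 True have "u = 0" by simp
      with e1 have "t = 1" by auto
      with e1 `u = 0` have "v = - px" by (simp add: eq_neg_iff_add_eq_0 add.commute)
      then show ?thesis using L True `u=0` `t=1` unfolding L0_def by simp
    next
      case False
      have "u = 1" using e3 e1(3) False by auto
      then have t: "t = (qy - py)/(qx - px)" using e3 False by (simp add: field_simps)
      have "v = py - t*px" using e1 `u=1` by (simp add: algebra_simps)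
      then show ?thesis using L False `u=1` t unfolding L0_def by simp
    qed
  qed
  have LL: "line_through p q = L0" unfolding line_through_def
    by (rule the_equality[of "\<lambda>L. normalized L \<and> on_line p L \<and> on_line q L", OF P0 U])
  show ?thesis
  proof (cases "qx = px")
    case True
    then have "qy - py \<noteq> 0" using d by simp
    then show ?thesis using True pq unfolding LL L0_def tL_def uL_def
      by (intro exI[of _ "1/(qy-py)"]) simp
  next
    case False
    then have "qx - px \<noteq> 0" by simp
    then show ?thesis using False pq unfolding LL L0_def tL_def uL_def
      by (intro exI[of _ "1/(qx-px)"]) simp
  qed
qed
lemma key:
  fixes a1 a2 a3 b1 b2 b3 c1 c2 c3 e1 e2 e3 :: "'a::field"
  assumes n1: "a2*b1 - a1*b2 \<noteq> 0" and n2: "c2*e1 - c1*e2 \<noteq> 0"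
   and n3: "b2*c1 - b1*c2 \<noteq> 0" and n4: "e2*a1 - e1*a2 \<noteq> 0"
  defines "al \<equiv> a1*b2*c2*e2 - a2*b1*c2*e2 + a2*b2*c1*e2 - a2*b2*c2*e1"
  and "be \<equiv> a1*b2*c1*e2 - a2*b1*c2*e1"
  and "ga \<equiv> a1*b1*c1*e2 - a1*b1*c2*e1 + a1*b2*c1*e1 - a2*b1*c1*e1"
  and "px \<equiv> (a3*b2 - a2*b3)/(a2*b1 - a1*b2)" and "py \<equiv> (b1*a3 - a1*b3)/(a2*b1 - a1*b2)"
  and "qx \<equiv> (c3*e2 - c2*e3)/(c2*e1 - c1*e2)" and "qy \<equiv> (e1*c3 - c1*e3)/(c2*e1 - c1*e2)"
  and "rx \<equiv> (b3*c2 - b2*c3)/(b2*c1 - b1*c2)" and "ry \<equiv> (c1*b3 - b1*c3)/(b2*c1 - b1*c2)"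
  and "sx \<equiv> (e3*a2 - e2*a3)/(e2*a1 - e1*a2)" and "sy \<equiv> (a1*e3 - e1*a3)/(e2*a1 - e1*a2)"
  shows "(qx-px)*(ga*(sx-rx) - be*(sy-ry)) + (qy-py)*(-be*(sx-rx) + al*(sy-ry)) = 0"
  unfolding al_def be_def ga_def px_def py_def qx_def qy_def rx_def ry_def sx_def sy_def
  using n1 n2 n3 n4 by (simp add: field_simps) algebra

lemma meet_on:
  fixes L M :: "'a::field line"
  assumes np: "\<not> parallel L M"
  shows "on_line (meet L M) L \<and> on_line (meet L M) M"
proof -
  let ?D = "uL L * tL M - tL L * uL M"
  have D: "?D \<noteq> 0" using np unfolding parallel_def by (auto simp: algebra_simps)
  have on1: "tL L * ((vL L * uL M - uL L * vL M)/?D) - uL L * ((tL M * vL L - tL L * vL M)/?D) + vL L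
     = (tL L * (vL L * uL M - uL L * vL M) - uL L * (tL M * vL L - tL L * vL M) + vL L * ?D)/?D"
    using D by (rule div_aux)
  have on2: "tL M * ((vL L * uL M - uL L * vL M)/?D) - uL M * ((tL M * vL L - tL L * vL M)/?D) + vL M
     = (tL M * (vL L * uL M - uL L * vL M) - uL M * (tL M * vL L - tL L * vL M) + vL M * ?D)/?D"
    using D by (rule div_aux)
  have z1: "tL L * (vL L * uL M - uL L * vL M) - uL L * (tL M * vL L - tL L * vL M) + vL L * ?D = 0"
    by (simp add: algebra_simps)
  have z2: "tL M * (vL L * uL M - uL L * vL M) - uL M * (tL M * vL L - tL L * vL M) + vL M * ?D = 0"
    by (simp add: algebra_simps)
  show ?thesis
    unfolding meet_eq[OF np] on_line_def fst_conv snd_conv on1 on2 z1 z2 by simp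
qed

lemma qform_scale:
  "qform A B A' B' (c*a, c*b) (d*e, d*f) = c*d*qform A B A' B' (a,b) (e,f)"
  by (simp add: qform_def algebra_simps)

lemma npar: "\<not> parallel L M \<Longrightarrow> uL L * tL M - tL L * uL M \<noteq> 0"
  unfolding parallel_def by (auto simp: algebra_simps)

theorem proposition2p5:
  fixes A B A' B' :: "'a::field line"
  assumes char: "(2::'a) \<noteq> 0"
    and Q: "quadrilateral A B A' B'"
  shows "q_orthogonal A B A' B' A A' \<and> q_orthogonal A B A' B' B B' \<and>
         q_orthogonal A B A' B' (diag1 A B A' B') (diag2 A B A' B')"
proof -
  have p1: "\<not> parallel A B" and p2: "\<not> parallel B A'" and p3: "\<not> parallel A' B'"
    and p4: "\<not> parallel B' A"
    and nc: "\<not> (\<exists>p. on_line p A \<and> on_line p B \<and> on_line p A' \<and> on_line p B')"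
    using Q unfolding quadrilateral_def by auto
  have o1: "q_orthogonal A B A' B' A A'"
    unfolding q_orthogonal_def qform_def qalpha_def qbeta_def qgamma_def fst_conv snd_conv
    by algebra
  have o2: "q_orthogonal A B A' B' B B'"
    unfolding q_orthogonal_def qform_def qalpha_def qbeta_def qgamma_def fst_conv snd_conv
    by algebra
  have k: "qform A B A' B' (fst (meet A' B') - fst (meet A B), snd (meet A' B') - snd (meet A B))
     (fst (meet B' A) - fst (meet B A'), snd (meet B' A) - snd (meet B A')) = 0"
    unfolding meet_eq[OF p1] meet_eq[OF p2] meet_eq[OF p3] meet_eq[OF p4]
      qform_def qalpha_def qbeta_def qgamma_def fst_conv snd_conv
    by (rule key[OF npar[OF p1] npar[OF p3] npar[OF p2] npar[OF p4]])
  have m1: "meet A B \<noteq> meet A' B'"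
    using meet_on[OF p1] meet_on[OF p3] nc by metis
  have m2: "meet B A' \<noteq> meet B' A"
    using meet_on[OF p2] meet_on[OF p4] nc by metis
  obtain c1 where c1: "uL (diag1 A B A' B') = c1 * (fst (meet A' B') - fst (meet A B))"
     "tL (diag1 A B A' B') = c1 * (snd (meet A' B') - snd (meet A B))"
    using line_through_prop[OF m1] unfolding diag1_def by blast
  obtain c2 where c2: "uL (diag2 A B A' B') = c2 * (fst (meet B' A) - fst (meet B A'))"
     "tL (diag2 A B A' B') = c2 * (snd (meet B' A) - snd (meet B A'))"
    using line_through_prop[OF m2] unfolding diag2_def by blast
  have o3: "q_orthogonal A B A' B' (diag1 A B A' B') (diag2 A B A' B')"
    unfolding q_orthogonal_def c1 c2 qform_scale k by simp
  show ?thesis using o1 o2 o3 by blast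
qed

end
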